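(* Let $G=(V,E)$ be a graph and $T\subseteq E$ a spanning tree of $G$. Let $e\in T$ and $s_e\in E\setminus T$ be such that $T'=T-e+s_e$ is a spanning tree. Let $f\in T\setminus\{e\}$ and $s\in E\setminus(T\cup\{s_e\})$ (so $f\in T'$ and $s\notin T'$). Let $C_e$ be the unique cycle in $T+s_e$, $C_s$ the unique cycle in $T+s$, $C'_e$ the unique cycle in $T'+e$, and $C'_s$ the unique cycle in $T'+s$. Suppose that neither of the following holds: (i) $f\in C_e$ and $e\in C_s$; (ii) $f\in C'_e$ and $s_e\in C'_s$. Then $T-f+s$ is connected if and only if $T'-f+s$ is connected. *)

theory Defs
  imports Main
begin

text \<open>Finite simple undirected graphs: vertex set V, edges are 2-element subsets of V.
  Subgraphs are given by edge sets; a spanning subgraph uses all of V.\<close>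

definition graph :: "'a set \<Rightarrow> 'a set set \<Rightarrow> bool" where
  "graph V E \<longleftrightarrow> finite V \<and> (\<forall>x\<in>E. x \<subseteq> V \<and> card x = 2)"

definition adj :: "'a set set \<Rightarrow> ('a \<times> 'a) set" where
  "adj F = {(x, y). {x, y} \<in> F \<and> x \<noteq> y}"

definition connected_on :: "'a set \<Rightarrow> 'a set set \<Rightarrow> bool" where
  "connected_on V F \<longleftrightarrow> (\<forall>u\<in>V. \<forall>v\<in>V. (u, v) \<in> (adj F)\<^sup>*)"

definition is_cycle :: "'a set set \<Rightarrow> bool" where
  "is_cycle C \<longleftrightarrow> C \<noteq> {} \<and> finite C \<and> (\<forall>x\<in>C. card x = 2) \<and>
     (\<forall>v\<in>\<Union>C. card {x\<in>C. v \<in> x} = 2) \<and> connected_on (\<Union>C) C"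

definition acyclic_edges :: "'a set set \<Rightarrow> bool" where
  "acyclic_edges F \<longleftrightarrow> \<not> (\<exists>C. C \<subseteq> F \<and> is_cycle C)"

definition spanning_tree :: "'a set \<Rightarrow> 'a set set \<Rightarrow> 'a set set \<Rightarrow> bool" where
  "spanning_tree V E T \<longleftrightarrow> T \<subseteq> E \<and> connected_on V T \<and> acyclic_edges T"

definition fund_cycle :: "'a set set \<Rightarrow> 'a set \<Rightarrow> 'a set set" where
  "fund_cycle T s = (THE C. C \<subseteq> insert s T \<and> is_cycle C)"

end

theory Submission
  imports Defs
begin


abbreviation reach :: "'a set set \<Rightarrow> 'a \<Rightarrow> 'a \<Rightarrow> bool" where
  "reach F u v \<equiv> (u, v) \<in> (adj F)\<^sup>*"

lemma adj_iff: "(x,y) \<in> adj F \<longleftrightarrow> {x,y} \<in> F \<and> x \<noteq> y"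
  by (simp add: adj_def)

lemma reach_sym: "reach F u v \<Longrightarrow> reach F v u"
proof -
  have "sym (adj F)" unfolding sym_def adj_def by (auto simp: insert_commute)
  then have "sym ((adj F)\<^sup>*)" by (rule sym_rtrancl)
  moreover assume "reach F u v"
  ultimately show ?thesis by (meson symD)
qed

lemma reach_mono: "F \<subseteq> G \<Longrightarrow> reach F u v \<Longrightarrow> reach G u v"
proof -
  assume "F \<subseteq> G" "reach F u v"
  moreover have "adj F \<subseteq> adj G" using \<open>F \<subseteq> G\<close> by (auto simp: adj_def)
  ultimately show ?thesis using rtrancl_mono by blast
qed

lemma reach_edge: "{u,v} \<in> F \<Longrightarrow> reach F u v"
  by (cases "u = v") (auto simp: adj_def intro!: r_into_rtrancl)

lemma reach_trans: "reach F u v \<Longrightarrow> reach F v w \<Longrightarrow> reach F u w"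
  by (rule rtrancl_trans)

lemma split_G1:
  "reach F p w \<Longrightarrow> reach (F - {{a,b}}) p w \<or> reach (F - {{a,b}}) a w \<or> reach (F - {{a,b}}) b w"
proof (induction rule: rtrancl_induct)
  case base then show ?case by simp
next
  case (step y z)
  from step.hyps(2) have yz: "{y,z} \<in> F" "y \<noteq> z" by (auto simp: adj_def)
  show ?case
  proof (cases "{y,z} = {a,b}")
    case True
    have "z \<in> {y,z}" by simp
    then have "z = a \<or> z = b" using True by simp
    then show ?thesis by (metis rtrancl.rtrancl_refl)
  next
    case False
    then have yz': "(y,z) \<in> adj (F - {{a,b}})" using yz by (auto simp: adj_def)
    have st: "\<And>q. reach (F - {{a,b}}) q y \<Longrightarrow> reach (F - {{a,b}}) q z"
      using yz' by (simp add: rtrancl.rtrancl_into_rtrancl)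
    show ?thesis using step.IH st by blast
  qed
qed

lemma bypass:
  assumes "reach F c d" "reach (insert {c,d} F) u w"
  shows "reach F u w"
  using assms(2)
proof (induction rule: rtrancl_induct)
  case base then show ?case by simp
next
  case (step y z)
  from step.hyps(2) have yz: "{y,z} \<in> insert {c,d} F" "y \<noteq> z" unfolding adj_def by simp_all
  have "reach F y z"
  proof (cases "{y,z} = {c,d}")
    case True
    then have "(y = c \<and> z = d) \<or> (y = d \<and> z = c)" by (simp add: doubleton_eq_iff)
    then show ?thesis
    proof
      assume "y = c \<and> z = d" then show ?thesis using assms(1) by simp
    next
      assume "y = d \<and> z = c" then show ?thesis using reach_sym[OF assms(1)] by simp
    qed
  next
    case False
    then have "{y,z} \<in> F" using yz by simp
    then show ?thesis by (rule reach_edge)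
  qed
  with step.IH show ?case by (rule reach_trans)
qed

fun walk_edges :: "'a list \<Rightarrow> 'a set set" where
  "walk_edges (a # b # r) = insert {a,b} (walk_edges (b # r))"
| "walk_edges _ = {}"

lemma walk_edges_suffix: "walk_edges (u # ys) \<subseteq> walk_edges (xs @ u # ys)"
proof (induction xs)
  case Nil then show ?case by simp
next
  case (Cons x xs) then show ?case by (cases xs) auto
qed

lemma reach_walk:
  "reach G u v \<Longrightarrow> \<exists>p. p \<noteq> [] \<and> hd p = u \<and> last p = v \<and> distinct p \<and> walk_edges p \<subseteq> G"
proof (induction rule: converse_rtrancl_induct)
  case base
  show ?case by (rule exI[of _ "[v]"]) simp
next
  case (step y z)
  then obtain p where p: "p \<noteq> []" "hd p = z" "last p = v" "distinct p" "walk_edges p \<subseteq> G" by blast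
  show ?case
  proof (cases "y \<in> set p")
    case True
    then obtain xs ys where xy: "p = xs @ y # ys" by (meson split_list)
    show ?thesis
      apply (rule exI[of _ "y # ys"])
      using p xy walk_edges_suffix[of y ys xs] by auto
  next
    case False
    from p obtain p' where pp: "p = z # p'" by (cases p) auto
    have "{y,z} \<in> G" using step.hyps(1) by (simp add: adj_def)
    then show ?thesis
      apply (intro exI[of _ "y # p"])
      using p False pp by auto
  qed
qed

lemma walk_union: "\<Union>(walk_edges p) \<subseteq> set p"
  by (induction p rule: walk_edges.induct) auto

lemma walk_set_sub: "length p \<ge> 2 \<Longrightarrow> set p \<subseteq> \<Union>(walk_edges p)"
proof (induction p rule: walk_edges.induct)
  case (1 a b r)
  then show ?case by (cases r) auto
qed auto

lemma walk_union_eq: "length p \<ge> 2 \<Longrightarrow> \<Union>(walk_edges p) = set p"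
  using walk_set_sub walk_union by (metis subset_antisym)

lemma walk_finite: "finite (walk_edges p)"
  by (induction p rule: walk_edges.induct) auto

lemma walk_card2: "distinct p \<Longrightarrow> z \<in> walk_edges p \<Longrightarrow> card z = 2"
  by (induction p rule: walk_edges.induct) auto

lemma walk_conn: "w \<in> set p \<Longrightarrow> reach (walk_edges p) (hd p) w"
proof (induction p rule: walk_edges.induct)
  case (1 a b r)
  show ?case
  proof (cases "w = a")
    case True then show ?thesis by simp
  next
    case False
    then have "reach (walk_edges (b # r)) b w" using 1 by simp
    then have "reach (walk_edges (a # b # r)) b w" by (rule reach_mono[rotated]) auto
    moreover have "reach (walk_edges (a # b # r)) a b" by (rule reach_edge) simp
    ultimately show ?thesis by (simp add: reach_trans)
  qed
qed auto

lemma walk_deg: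
  "distinct p \<Longrightarrow> length p \<ge> 2 \<Longrightarrow> card {z \<in> walk_edges p. w \<in> z} =
     (if w \<notin> set p then 0 else if w = hd p \<or> w = last p then 1 else 2)"
proof (induction p rule: walk_edges.induct)
  case (1 a b r)
  show ?case
  proof (cases "r = []")
    case True
    then have we: "walk_edges (a # b # r) = {{a,b}}" by simp
    show ?thesis
    proof (cases "w \<in> {a,b}")
      case True
      then have "{z \<in> walk_edges (a # b # r). w \<in> z} = {{a,b}}" using we by auto
      then show ?thesis using True \<open>r = []\<close> by auto
    next
      case False
      then have "{z \<in> walk_edges (a # b # r). w \<in> z} = {}" using we by auto
      then show ?thesis using False \<open>r = []\<close> by auto
    qed
  next
    case False
    define W where "W = walk_edges (b # r)"
    have IH: "card {z \<in> W. w \<in> z} =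
       (if w \<notin> set (b # r) then 0 else if w = b \<or> w = last r then 1 else 2)"
      using 1 False unfolding W_def by (cases r) auto
    have aW: "a \<notin> \<Union>W" using walk_union[of "b # r"] 1(2) unfolding W_def by auto
    then have abW: "{a,b} \<notin> W" by auto
    have fW: "finite {z \<in> W. w \<in> z}" unfolding W_def by (rule finite_subset[OF _ walk_finite]) auto
    have eq: "walk_edges (a # b # r) = insert {a,b} W" unfolding W_def by simp
    have lst: "last (a # b # r) = last r" using False by simp
    have blr: "b \<noteq> last r" using 1(2) False by (metis distinct.simps(2) last_in_set)
    have alr: "a \<noteq> last r" using 1(2) False by (metis distinct.simps(2) last_in_set list.set_intros(2))
    show ?thesis
    proof (cases "w \<in> {a,b}")
      case True
      then have "{z \<in> insert {a,b} W. w \<in> z} = insert {a,b} {z \<in> W. w \<in> z}" by auto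
      then have c: "card {z \<in> insert {a,b} W. w \<in> z} = Suc (card {z \<in> W. w \<in> z})"
        using abW fW by simp
      show ?thesis
      proof (cases "w = a")
        case True
        then have e0: "{z \<in> W. w \<in> z} = {}" using aW by auto
        have "card {z \<in> walk_edges (a # b # r). w \<in> z} = 1"
          using c eq e0 by (metis One_nat_def card.empty)
        then show ?thesis using True by simp
      next
        case False
        then have "w = b" using \<open>w \<in> {a,b}\<close> by auto
        then show ?thesis using c eq IH 1(2) blr lst by auto
      qed
    next
      case False
      then have "{z \<in> insert {a,b} W. w \<in> z} = {z \<in> W. w \<in> z}" by auto
      then show ?thesis using eq IH lst False by auto
    qed
  qed
qed auto



lemma path_cycle:
  assumes "reach G u v" "u \<noteq> v" "{u,v} \<notin> G"
  shows "\<exists>C. C \<subseteq> insert {u,v} G \<and> is_cycle C \<and> {u,v} \<in> C"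
proof -
  obtain p where p: "p \<noteq> []" "hd p = u" "last p = v" "distinct p" "walk_edges p \<subseteq> G"
    using reach_walk[OF assms(1)] by blast
  have len: "length p \<ge> 2"
  proof (rule ccontr)
    assume "\<not> ?thesis"
    obtain x xs where pxs: "p = x # xs" using p(1) by (cases p) auto
    then have "xs = []" using \<open>\<not> length p \<ge> 2\<close> by (cases xs) auto
    then show False using pxs p assms(2) by simp
  qed
  define C where "C = insert {u,v} (walk_edges p)"
  have uv_notin: "{u,v} \<notin> walk_edges p" using p(5) assms(3) by blast
  have us: "u \<in> set p" "v \<in> set p" using p(1-3) by auto
  have UC: "\<Union>C = set p" unfolding C_def using walk_union_eq[OF len] us by auto
  have "is_cycle C" unfolding is_cycle_def
  proof (intro conjI ballI)
    show "C \<noteq> {}" by (simp add: C_def)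
    show "finite C" by (simp add: C_def walk_finite)
  next
    fix x assume "x \<in> C" then show "card x = 2"
      unfolding C_def using walk_card2[OF p(4)] assms(2) by auto
  next
    fix w assume w: "w \<in> \<Union>C"
    then have ws: "w \<in> set p" using UC by simp
    have fin: "finite {z \<in> walk_edges p. w \<in> z}" by (rule finite_subset[OF _ walk_finite]) auto
    have deg: "card {z \<in> walk_edges p. w \<in> z} =
     (if w \<notin> set p then 0 else if w = hd p \<or> w = last p then 1 else 2)"
      by (rule walk_deg[OF p(4) len])
    show "card {x \<in> C. w \<in> x} = 2"
    proof (cases "w = u \<or> w = v")
      case True
      then have "{x \<in> C. w \<in> x} = insert {u,v} {z \<in> walk_edges p. w \<in> z}" unfolding C_def by auto
      then show ?thesis using fin uv_notin deg ws True p by auto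
    next
      case False
      then have "{x \<in> C. w \<in> x} = {z \<in> walk_edges p. w \<in> z}" unfolding C_def by auto
      then show ?thesis using deg ws False p by auto
    qed
  next
    show "connected_on (\<Union>C) C" unfolding connected_on_def UC
    proof (intro ballI)
      fix a b assume "a \<in> set p" "b \<in> set p"
      then have r1: "reach (walk_edges p) (hd p) a" and r2: "reach (walk_edges p) (hd p) b"
        by (simp_all add: walk_conn)
      have sub: "walk_edges p \<subseteq> C" by (simp add: C_def subset_insertI)
      have r1': "reach C (hd p) a" by (rule reach_mono[OF sub r1])
      have r2': "reach C (hd p) b" by (rule reach_mono[OF sub r2])
      show "reach C a b" by (rule reach_trans[OF reach_sym[OF r1'] r2'])
    qed
  qed
  moreover have "C \<subseteq> insert {u,v} G" using p(5) C_def by auto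
  moreover have "{u,v} \<in> C" by (simp add: C_def)
  ultimately show ?thesis by blast
qed

lemma cycle_reach:
  assumes C: "is_cycle C" and xC: "{u,v} \<in> C" and uv: "u \<noteq> v"
  shows "reach (C - {{u,v}}) u v"
proof (rule ccontr)
  assume nr: "\<not> ?thesis"
  define x where "x = {u,v}"
  define S where "S = {w \<in> \<Union>C. reach (C - {x}) u w}"
  from C have finC: "finite C" and c2: "\<forall>z\<in>C. card z = 2"
    and deg: "\<forall>w\<in>\<Union>C. card {z\<in>C. w\<in>z} = 2" by (auto simp: is_cycle_def)
  have "\<forall>z\<in>C. finite z"
  proof
    fix z assume "z \<in> C" then have "card z = 2" using c2 by blast
    then show "finite z" by (intro card_ge_0_finite) simp
  qed
  then have finU: "finite (\<Union>C)" using finC by blast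
  have finS: "finite S" by (rule finite_subset[OF _ finU]) (auto simp: S_def)
  have uS: "u \<in> S" using xC by (auto simp: S_def x_def)
  have vS: "v \<notin> S" using nr by (simp add: S_def x_def)
  have xS: "x \<inter> S = {u}" using uS vS uv by (auto simp: x_def)
  have closed: "q \<in> S" if "z \<in> C" "z \<noteq> x" "z = {p,q}" "p \<in> S" for z p q
  proof -
    have "{p,q} \<in> C - {x}" using that by simp
    then have a: "reach (C - {x}) p q" by (rule reach_edge)
    have b: "reach (C - {x}) u p" using \<open>p \<in> S\<close> by (simp add: S_def)
    have "reach (C-{x}) u q" by (rule reach_trans[OF b a])
    moreover have "q \<in> \<Union>C" using that by blast
    ultimately show "q \<in> S" by (simp add: S_def)
  qed
  have even_z: "even (card (z \<inter> S))" if z: "z \<in> C - {x}" for z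
  proof -
    obtain p q where pq: "z = {p,q}" "p \<noteq> q" using c2 z by (meson DiffD1 card_2_iff)
    have pq': "z = {q,p}" using pq by auto
    have "p \<in> S \<longleftrightarrow> q \<in> S" using closed[of z p q] closed[of z q p] z pq pq' by blast
    then have "z \<inter> S = {} \<or> z \<inter> S = z" using pq by auto
    then show ?thesis using pq by auto
  qed
  have sum1: "(\<Sum>w\<in>S. card {z\<in>C. w\<in>z}) = 2 * card S"
  proof -
    have "(\<Sum>w\<in>S. card {z\<in>C. w\<in>z}) = (\<Sum>w\<in>S. 2)"
      using deg by (intro sum.cong) (auto simp: S_def)
    then show ?thesis by simp
  qed
  have cnt: "card {z\<in>C. w\<in>z} = (\<Sum>z\<in>C. if w \<in> z then 1 else 0)" for w
    using finC by (simp only: card_eq_sum sum.inter_filter)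
  have cnt2: "(\<Sum>w\<in>S. if w \<in> z then 1 else 0) = card (z \<inter> S)" for z :: "'a set"
  proof -
    have "(\<Sum>w\<in>S. if w \<in> z then 1 else 0) = card {w\<in>S. w \<in> z}"
      using finS by (simp only: card_eq_sum sum.inter_filter)
    also have "{w\<in>S. w \<in> z} = z \<inter> S" by auto
    finally show ?thesis .
  qed
  have sum2: "(\<Sum>w\<in>S. card {z\<in>C. w\<in>z}) = (\<Sum>z\<in>C. card (z \<inter> S))"
  proof -
    have "(\<Sum>w\<in>S. card {z\<in>C. w\<in>z}) = (\<Sum>w\<in>S. \<Sum>z\<in>C. if w \<in> z then 1 else (0::nat))"
      using cnt by simp
    also have "\<dots> = (\<Sum>z\<in>C. \<Sum>w\<in>S. if w \<in> z then 1 else (0::nat))" by (rule sum.swap)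
    also have "\<dots> = (\<Sum>z\<in>C. card (z \<inter> S))" using cnt2 by simp
    finally show ?thesis .
  qed
  have xC': "x \<in> C" using xC by (simp add: x_def)
  have sum3: "(\<Sum>z\<in>C. card (z \<inter> S)) = card (x \<inter> S) + (\<Sum>z\<in>C-{x}. card (z \<inter> S))"
    using finC xC' by (simp add: sum.remove)
  have ev: "even (\<Sum>z\<in>C-{x}. card (z \<inter> S))" using even_z by (intro dvd_sum) auto
  have "odd (\<Sum>z\<in>C. card (z \<inter> S))" using sum3 ev xS by simp
  moreover have "even (\<Sum>z\<in>C. card (z \<inter> S))" using sum1 sum2 by simp
  ultimately show False by simp
qed



lemma tree_sep:
  assumes "acyclic_edges T" "{a,b} \<in> T" "a \<noteq> b"
  shows "\<not> reach (T - {{a,b}}) a b"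
proof
  assume "reach (T - {{a,b}}) a b"
  from path_cycle[OF this assms(3)] obtain C where C: "C \<subseteq> insert {a,b} (T - {{a,b}})" "is_cycle C"
    by auto
  then have "C \<subseteq> T" using assms(2) by auto
  with C(2) assms(1) show False by (auto simp: acyclic_edges_def)
qed

lemma tree_sides:
  assumes "connected_on V T" "a \<in> V" "w \<in> V"
  shows "reach (T - {{a,b}}) a w \<or> reach (T - {{a,b}}) b w"
proof -
  have "reach T a w" using assms by (simp add: connected_on_def)
  from split_G1[OF this, of a b] show ?thesis by blast
qed

lemma cross:
  assumes con: "connected_on V T" and ac: "acyclic_edges T"
    and ab: "{a,b} \<in> T" "a \<noteq> b" "a \<in> V" "b \<in> V"
    and cd: "c \<in> V" "d \<in> V"
  shows "connected_on V (insert {c,d} (T - {{a,b}})) \<longleftrightarrow> \<not> reach (T - {{a,b}}) c d"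
proof
  assume cn: "connected_on V (insert {c,d} (T - {{a,b}}))"
  show "\<not> reach (T - {{a,b}}) c d"
  proof
    assume r: "reach (T - {{a,b}}) c d"
    have "reach (insert {c,d} (T - {{a,b}})) a b" using cn ab by (simp add: connected_on_def)
    then have "reach (T - {{a,b}}) a b" by (rule bypass[OF r])
    with tree_sep[OF ac ab(1,2)] show False by simp
  qed
next
  assume nr: "\<not> reach (T - {{a,b}}) c d"
  define F where "F = T - {{a,b}}"
  define G where "G = insert {c,d} F"
  have FG: "F \<subseteq> G" by (auto simp: G_def)
  have cdG: "reach G c d" by (rule reach_edge) (simp add: G_def)
  have nr': "\<not> reach F c d" using nr by (simp add: F_def)
  have sc: "reach F a c \<or> reach F b c" using tree_sides[OF con ab(3) cd(1)] by (simp add: F_def)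
  have sd: "reach F a d \<or> reach F b d" using tree_sides[OF con ab(3) cd(2)] by (simp add: F_def)
  have abG: "reach G a b"
  proof -
    from sc show ?thesis
    proof
      assume ac': "reach F a c"
      from sd show ?thesis
      proof
        assume ad: "reach F a d"
        have "reach F c d" by (rule reach_trans[OF reach_sym[OF ac'] ad])
        with nr' show ?thesis by simp
      next
        assume bd: "reach F b d"
        have "reach G a c" by (rule reach_mono[OF FG ac'])
        then have "reach G a d" by (rule reach_trans[OF _ cdG])
        moreover have "reach G d b" by (rule reach_mono[OF FG reach_sym[OF bd]])
        ultimately show ?thesis by (rule reach_trans)
      qed
    next
      assume bc: "reach F b c"
      from sd show ?thesis
      proof
        assume ad: "reach F a d"
        have "reach G a d" by (rule reach_mono[OF FG ad])
        then have "reach G a c" by (rule reach_trans[OF _ reach_sym[OF cdG]])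
        moreover have "reach G c b" by (rule reach_mono[OF FG reach_sym[OF bc]])
        ultimately show ?thesis by (rule reach_trans)
      next
        assume bd: "reach F b d"
        have "reach F c d" by (rule reach_trans[OF reach_sym[OF bc] bd])
        with nr' show ?thesis by simp
      qed
    qed
  qed
  have aw: "reach G a w" if "w \<in> V" for w
  proof -
    have "reach F a w \<or> reach F b w" using tree_sides[OF con ab(3) that] by (simp add: F_def)
    then show ?thesis
    proof
      assume "reach F a w" then show ?thesis by (rule reach_mono[OF FG])
    next
      assume "reach F b w" then have "reach G b w" by (rule reach_mono[OF FG])
      then show ?thesis by (rule reach_trans[OF abG])
    qed
  qed
  have "connected_on V G" unfolding connected_on_def
  proof (intro ballI)
    fix u w assume "u \<in> V" "w \<in> V"
    show "reach G u w" by (rule reach_trans[OF reach_sym[OF aw[OF \<open>u \<in> V\<close>]] aw[OF \<open>w \<in> V\<close>]])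
  qed
  then show "connected_on V (insert {c,d} (T - {{a,b}}))" by (simp add: G_def F_def)
qed

lemma graph_edge:
  assumes "graph V E" "x \<in> E"
  obtains a b where "x = {a,b}" "a \<noteq> b" "a \<in> V" "b \<in> V"
proof -
  have xV: "x \<subseteq> V" and "card x = 2" using assms by (auto simp: graph_def)
  then obtain a b where ab: "x = {a,b}" "a \<noteq> b" by (auto simp: card_2_iff)
  moreover have "a \<in> V" "b \<in> V" using xV ab by auto
  ultimately show ?thesis by (rule that)
qed

lemma cyc_has:
  assumes st: "spanning_tree V E T"
    and C: "C \<subseteq> insert x T" "is_cycle C"
  shows "x \<in> C"
proof (rule ccontr)
  have ac: "acyclic_edges T" using st by (simp add: spanning_tree_def)
  assume "x \<notin> C" then have "C \<subseteq> T" using C(1) by auto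
  with C(2) ac show False by (auto simp: acyclic_edges_def)
qed

lemma cyc_char:
  assumes g: "graph V E" and st: "spanning_tree V E T" and cdE: "{c,d} \<in> E" and cdT: "{c,d} \<notin> T"
    and C: "C \<subseteq> insert {c,d} T" "is_cycle C" and y: "y \<in> T"
  shows "y \<in> C \<longleftrightarrow> \<not> reach (T - {y}) c d"
proof -
  have TE: "T \<subseteq> E" and ac: "acyclic_edges T" using st by (auto simp: spanning_tree_def)
  have xC: "{c,d} \<in> C" by (rule cyc_has[OF st C])
  have cd: "c \<noteq> d" using cdE g by (cases "c = d") (auto simp: graph_def)
  obtain a b where yab: "y = {a,b}" "a \<noteq> b" using graph_edge[OF g] TE y by blast
  show ?thesis
  proof
    assume yC: "y \<in> C"
    have r: "reach (C - {y}) a b" using cycle_reach[OF C(2) yC[unfolded yab] yab(2)] yab by simp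
    have "C - {y} \<subseteq> insert {c,d} (T - {y})" using C(1) by auto
    then have r2: "reach (insert {c,d} (T - {y})) a b" by (rule reach_mono[OF _ r])
    show "\<not> reach (T - {y}) c d"
    proof
      assume "reach (T - {y}) c d"
      then have "reach (T - {y}) a b" using r2 by (rule bypass)
      then show False using tree_sep[OF ac y[unfolded yab] yab(2)] yab by simp
    qed
  next
    assume nr: "\<not> reach (T-{y}) c d"
    show "y \<in> C"
    proof (rule ccontr)
      assume "y \<notin> C"
      have r: "reach (C - {{c,d}}) c d" by (rule cycle_reach[OF C(2) xC cd])
      have "C - {{c,d}} \<subseteq> T - {y}" using C(1) \<open>y\<notin>C\<close> by auto
      then have "reach (T - {y}) c d" by (rule reach_mono[OF _ r])
      with nr show False by simp
    qed
  qed
qed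

lemma fund_is:
  assumes g: "graph V E" and st: "spanning_tree V E T" and cdE: "{c,d} \<in> E" and cdT: "{c,d} \<notin> T"
    and C: "C \<subseteq> insert {c,d} T" "is_cycle C"
  shows "fund_cycle T {c,d} = C"
proof -
  have uniq: "D = C" if D: "D \<subseteq> insert {c,d} T" "is_cycle D" for D
  proof (rule set_eqI)
    fix z show "z \<in> D \<longleftrightarrow> z \<in> C"
    proof (cases "z \<in> T")
      case True
      show ?thesis using cyc_char[OF g st cdE cdT D True] cyc_char[OF g st cdE cdT C True] by simp
    next
      case False
      then show ?thesis using cyc_has[OF st D] cyc_has[OF st C] D(1) C(1) by auto
    qed
  qed
  show ?thesis unfolding fund_cycle_def
  proof (rule the_equality)
    show "C \<subseteq> insert {c,d} T \<and> is_cycle C" using C by simp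
  next
    fix D assume "D \<subseteq> insert {c,d} T \<and> is_cycle D"
    then show "D = C" using uniq by blast
  qed
qed

lemma fund_prop:
  assumes g: "graph V E" and st: "spanning_tree V E T" and cdE: "{c,d} \<in> E" and cdT: "{c,d} \<notin> T"
  shows "fund_cycle T {c,d} \<subseteq> insert {c,d} T \<and> is_cycle (fund_cycle T {c,d})"
proof -
  obtain a b where ab: "{c,d} = {a,b}" "a \<noteq> b" "a \<in> V" "b \<in> V" using graph_edge[OF g cdE] by blast
  have con: "connected_on V T" using st by (simp add: spanning_tree_def)
  have "reach T a b" using con ab by (simp add: connected_on_def)
  from path_cycle[OF this ab(2)] cdT ab(1) obtain C where C: "C \<subseteq> insert {c,d} T" "is_cycle C"
    by auto
  then show ?thesis using fund_is[OF g st cdE cdT C] by simp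
qed

lemma fund_conn:
  assumes g: "graph V E" and st: "spanning_tree V E T" and xE: "x \<in> E" and xT: "x \<notin> T" and y: "y \<in> T"
  shows "y \<in> fund_cycle T x \<longleftrightarrow> connected_on V (insert x (T - {y}))"
proof -
  have TE: "T \<subseteq> E" and ac: "acyclic_edges T" and con: "connected_on V T"
    using st by (auto simp: spanning_tree_def)
  obtain c d where cd: "x = {c,d}" "c \<noteq> d" "c \<in> V" "d \<in> V" using graph_edge[OF g xE] by blast
  obtain a b where ab: "y = {a,b}" "a \<noteq> b" "a \<in> V" "b \<in> V" using graph_edge[OF g] TE y by blast
  have P: "fund_cycle T {c,d} \<subseteq> insert {c,d} T" "is_cycle (fund_cycle T {c,d})"
    using fund_prop[OF g st xE[unfolded cd] xT[unfolded cd]] by auto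
  have "y \<in> fund_cycle T x \<longleftrightarrow> \<not> reach (T - {y}) c d"
    using cyc_char[OF g st xE[unfolded cd] xT[unfolded cd] P y] cd by simp
  also have "\<dots> \<longleftrightarrow> connected_on V (insert x (T - {y}))"
    using cross[OF con ac y[unfolded ab] ab(2-4) cd(3,4)] ab cd by simp
  finally show ?thesis .
qed

theorem lemmaD1:
  fixes V :: "'a set" and E T :: "'a set set" and e se f s :: "'a set"
  assumes "graph V E"
    and "spanning_tree V E T"
    and "e \<in> T" and "se \<in> E - T"
    and "spanning_tree V E (insert se (T - {e}))"
    and "f \<in> T - {e}"
    and "s \<in> E - (T \<union> {se})"
    and "\<not> (f \<in> fund_cycle T se \<and> e \<in> fund_cycle T s)"
    and "\<not> (f \<in> fund_cycle (insert se (T - {e})) e \<and>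
            se \<in> fund_cycle (insert se (T - {e})) s)"
  shows "connected_on V (insert s (T - {f})) \<longleftrightarrow>
         connected_on V (insert s (insert se (T - {e}) - {f}))"
proof -
  note g = assms(1) and st = assms(2)
  define T' where "T' = insert se (T - {e})"
  have st': "spanning_tree V E T'" using assms(5) by (simp add: T'_def)
  have TE: "T \<subseteq> E" and ac: "acyclic_edges T" and con: "connected_on V T"
    using st by (auto simp: spanning_tree_def)
  have ac': "acyclic_edges T'" and con': "connected_on V T'"
    using st' by (auto simp: spanning_tree_def)
  have eT: "e \<in> T" and seE: "se \<in> E" and seT: "se \<notin> T" using assms(3,4) by auto
  have fT: "f \<in> T" and fe: "f \<noteq> e" using assms(6) by auto
  have sE: "s \<in> E" and sT: "s \<notin> T" and sse: "s \<noteq> se" using assms(7) by auto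
  have fT': "f \<in> T'" using fT fe by (simp add: T'_def)
  have sT': "s \<notin> T'" using sT sse by (simp add: T'_def)
  have h8: "\<not> (connected_on V (insert se (T - {f})) \<and> connected_on V (insert s (T - {e})))"
    using assms(8) fund_conn[OF g st seE seT fT] fund_conn[OF g st sE sT eT] by simp
  have L: "connected_on V (insert s (T - {f})) \<longleftrightarrow> f \<in> fund_cycle T s"
    using fund_conn[OF g st sE sT fT] by simp
  have R: "connected_on V (insert s (T' - {f})) \<longleftrightarrow> f \<in> fund_cycle T' s"
    using fund_conn[OF g st' sE sT' fT'] by simp
  obtain c d where cd: "s = {c,d}" "c \<noteq> d" "c \<in> V" "d \<in> V" using graph_edge[OF g sE] by blast
  have "connected_on V (insert s (T - {f})) \<longleftrightarrow> connected_on V (insert s (T' - {f}))"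
  proof (cases "connected_on V (insert s (T - {e}))")
    case False
    then have ne: "e \<notin> fund_cycle T s" using fund_conn[OF g st sE sT eT] by simp
    have P: "fund_cycle T s \<subseteq> insert s T" "is_cycle (fund_cycle T s)"
      using fund_prop[OF g st sE[unfolded cd] sT[unfolded cd]] cd by auto
    have "fund_cycle T s \<subseteq> insert s T'" using P(1) ne by (auto simp: T'_def)
    then have "fund_cycle T' s = fund_cycle T s"
      using fund_is[OF g st' sE[unfolded cd] sT'[unfolded cd]] P(2) cd by simp
    then show ?thesis using L R by simp
  next
    case True
    then have nf: "\<not> connected_on V (insert se (T - {f}))" using h8 by blast
    obtain a b where ab: "f = {a,b}" "a \<noteq> b" "a \<in> V" "b \<in> V" using graph_edge[OF g] TE fT by blast
    obtain c' d' where cd': "se = {c',d'}" "c' \<noteq> d'" "c' \<in> V" "d' \<in> V" using graph_edge[OF g seE] by blast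
    have r': "reach (T - {f}) c' d'"
      using cross[OF con ac fT[unfolded ab] ab(2-4) cd'(3,4)] nf ab cd' by simp
    have sub: "T' - {f} \<subseteq> insert {c',d'} (T - {f})" using cd' by (auto simp: T'_def)
    have bk: "reach (T - {f}) u w" if "reach (T' - {f}) u w" for u w
      using bypass[OF r' reach_mono[OF sub that]] .
    have sep: "\<not> reach (T - {f}) a b" using tree_sep[OF ac fT[unfolded ab] ab(2)] ab by simp
    have key: "reach (T - {f}) c d \<longleftrightarrow> reach (T' - {f}) c d"
    proof
      assume r: "reach (T - {f}) c d"
      have sc: "reach (T' - {f}) a c \<or> reach (T' - {f}) b c"
        using tree_sides[OF con' ab(3) cd(3), of b] ab by simp
      have sd: "reach (T' - {f}) a d \<or> reach (T' - {f}) b d"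
        using tree_sides[OF con' ab(3) cd(4), of b] ab by simp
      from sc show "reach (T' - {f}) c d"
      proof
        assume ac1: "reach (T' - {f}) a c"
        from sd show ?thesis
        proof
          assume "reach (T' - {f}) a d"
          then show ?thesis by (rule reach_trans[OF reach_sym[OF ac1]])
        next
          assume bd: "reach (T' - {f}) b d"
          have "reach (T - {f}) a c" by (rule bk[OF ac1])
          then have "reach (T - {f}) a d" using r by (rule reach_trans)
          then have "reach (T - {f}) a b" by (rule reach_trans[OF _ reach_sym[OF bk[OF bd]]])
          with sep show ?thesis by simp
        qed
      next
        assume bc: "reach (T' - {f}) b c"
        from sd show ?thesis
        proof
          assume ad: "reach (T' - {f}) a d"
          have "reach (T - {f}) b c" by (rule bk[OF bc])
          then have "reach (T - {f}) b d" using r by (rule reach_trans)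
          then have "reach (T - {f}) b a" by (rule reach_trans[OF _ reach_sym[OF bk[OF ad]]])
          then have "reach (T - {f}) a b" by (rule reach_sym)
          with sep show ?thesis by simp
        next
          assume "reach (T' - {f}) b d"
          then show ?thesis by (rule reach_trans[OF reach_sym[OF bc]])
        qed
      qed
    next
      assume "reach (T' - {f}) c d"
      then show "reach (T - {f}) c d" by (rule bk)
    qed
    have c1: "connected_on V (insert s (T - {f})) \<longleftrightarrow> \<not> reach (T - {f}) c d"
      using cross[OF con ac fT[unfolded ab] ab(2-4) cd(3,4)] ab cd by simp
    have c2: "connected_on V (insert s (T' - {f})) \<longleftrightarrow> \<not> reach (T' - {f}) c d"
      using cross[OF con' ac' fT'[unfolded ab] ab(2-4) cd(3,4)] ab cd by simp
    show ?thesis using c1 c2 key by simp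
  qed
  then show ?thesis by (simp add: T'_def)
qed

end
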